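(* For any connected graphs $G$ and $H$, $$\beta (G_{SR}\boxtimes H_{SR})\ge \beta ((G\boxtimes H)_{SR})\ge \beta(G_{SR}\oplus H_{SR}).$$
   Context: $\beta(F)$ denotes the independence number of a graph $F$ (largest size of a set of pairwise non-adjacent vertices). For a connected graph $G$ with shortest-path distance $d_G$: $u$ is maximally distant from $v$ if for every neighbor $w$ of $u$, $d_G(v,w)\le d_G(u,v)$; $u,v$ are mutually maximally distant if each is maximally distant from the other. The strong resolving graph $G_{SR}$ has vertex set $V(G)$, with $u,v$ adjacent iff they are mutually maximally distant in $G$. The strong product $G\boxtimes H$ has vertex set $V(G)\times V(H)$, with $(a,b)\sim(c,d)$ iff ($a=c$ and $bd\in E(H)$) or ($ac\in E(G)$ and $b=d$) or ($ac\in E(G)$ and $bd\in E(H)$). The Cartesian sum $G\oplus H$ has vertex set $V(G)\times V(H)$, with $(a,b)\sim(c,d)$ iff $ac\in E(G)$ or $bd\in E(H)$. *)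

theory Defs
  imports Main
begin

definition graph :: "'a set \<Rightarrow> ('a \<Rightarrow> 'a \<Rightarrow> bool) \<Rightarrow> bool" where
  "graph V E \<longleftrightarrow> finite V \<and> V \<noteq> {} \<and>
     (\<forall>u v. E u v \<longrightarrow> u \<in> V \<and> v \<in> V \<and> u \<noteq> v \<and> E v u)"

definition is_walk :: "'a set \<Rightarrow> ('a \<Rightarrow> 'a \<Rightarrow> bool) \<Rightarrow> 'a list \<Rightarrow> bool" where
  "is_walk V E xs \<longleftrightarrow> xs \<noteq> [] \<and> set xs \<subseteq> V \<and>
     (\<forall>i. Suc i < length xs \<longrightarrow> E (xs ! i) (xs ! Suc i))"

definition connected_graph :: "'a set \<Rightarrow> ('a \<Rightarrow> 'a \<Rightarrow> bool) \<Rightarrow> bool" where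
  "connected_graph V E \<longleftrightarrow>
     (\<forall>u\<in>V. \<forall>v\<in>V. \<exists>xs. is_walk V E xs \<and> hd xs = u \<and> last xs = v)"

definition gdist :: "'a set \<Rightarrow> ('a \<Rightarrow> 'a \<Rightarrow> bool) \<Rightarrow> 'a \<Rightarrow> 'a \<Rightarrow> nat" where
  "gdist V E u v = (LEAST n. \<exists>xs. is_walk V E xs \<and> hd xs = u \<and> last xs = v \<and> length xs = Suc n)"

definition max_distant :: "'a set \<Rightarrow> ('a \<Rightarrow> 'a \<Rightarrow> bool) \<Rightarrow> 'a \<Rightarrow> 'a \<Rightarrow> bool" where
  "max_distant V E u v \<longleftrightarrow> (\<forall>w\<in>V. E u w \<longrightarrow> gdist V E v w \<le> gdist V E u v)"

definition mutually_max_distant :: "'a set \<Rightarrow> ('a \<Rightarrow> 'a \<Rightarrow> bool) \<Rightarrow> 'a \<Rightarrow> 'a \<Rightarrow> bool" where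
  "mutually_max_distant V E u v \<longleftrightarrow> max_distant V E u v \<and> max_distant V E v u"

text \<open>Edge relation of the strong resolving graph G_SR (vertex set V).\<close>
definition SR :: "'a set \<Rightarrow> ('a \<Rightarrow> 'a \<Rightarrow> bool) \<Rightarrow> 'a \<Rightarrow> 'a \<Rightarrow> bool" where
  "SR V E u v \<longleftrightarrow> u \<in> V \<and> v \<in> V \<and> u \<noteq> v \<and> mutually_max_distant V E u v"

definition strong_prod :: "'a set \<Rightarrow> ('a \<Rightarrow> 'a \<Rightarrow> bool) \<Rightarrow> 'b set \<Rightarrow> ('b \<Rightarrow> 'b \<Rightarrow> bool)
    \<Rightarrow> 'a \<times> 'b \<Rightarrow> 'a \<times> 'b \<Rightarrow> bool" where
  "strong_prod VG EG VH EH x y \<longleftrightarrow> x \<in> VG \<times> VH \<and> y \<in> VG \<times> VH \<and>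
     ((fst x = fst y \<and> EH (snd x) (snd y)) \<or>
      (EG (fst x) (fst y) \<and> snd x = snd y) \<or>
      (EG (fst x) (fst y) \<and> EH (snd x) (snd y)))"

definition cart_sum :: "'a set \<Rightarrow> ('a \<Rightarrow> 'a \<Rightarrow> bool) \<Rightarrow> 'b set \<Rightarrow> ('b \<Rightarrow> 'b \<Rightarrow> bool)
    \<Rightarrow> 'a \<times> 'b \<Rightarrow> 'a \<times> 'b \<Rightarrow> bool" where
  "cart_sum VG EG VH EH x y \<longleftrightarrow> x \<in> VG \<times> VH \<and> y \<in> VG \<times> VH \<and>
     (EG (fst x) (fst y) \<or> EH (snd x) (snd y))"

definition independent_set :: "'a set \<Rightarrow> ('a \<Rightarrow> 'a \<Rightarrow> bool) \<Rightarrow> 'a set \<Rightarrow> bool" where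
  "independent_set V E S \<longleftrightarrow> S \<subseteq> V \<and> (\<forall>x\<in>S. \<forall>y\<in>S. x \<noteq> y \<longrightarrow> \<not> E x y)"

text \<open>Independence number (for finite V).\<close>
definition indep_num :: "'a set \<Rightarrow> ('a \<Rightarrow> 'a \<Rightarrow> bool) \<Rightarrow> nat" where
  "indep_num V E = Max (card ` {S. independent_set V E S})"

end

theory Submission
  imports Defs
begin

lemma gdist_le:
  assumes "is_walk V E xs" "hd xs = u" "last xs = v"
  shows "gdist V E u v \<le> length xs - 1"
  unfolding gdist_def
  apply (rule Least_le)
  using assms by (intro exI[of _ xs]) (auto simp: is_walk_def)

lemma gdist_ex:
  assumes "is_walk V E xs" "hd xs = u" "last xs = v"
  shows "\<exists>ys. is_walk V E ys \<and> hd ys = u \<and> last ys = v \<and> length ys = Suc (gdist V E u v)"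
proof -
  have "\<exists>n. \<exists>xs. is_walk V E xs \<and> hd xs = u \<and> last xs = v \<and> length xs = Suc n"
    using assms by (intro exI[of _ "length xs - 1"] exI[of _ xs]) (auto simp: is_walk_def)
  from LeastI_ex[OF this] show ?thesis unfolding gdist_def .
qed

lemma conn_walk: "connected_graph V E \<Longrightarrow> u\<in>V \<Longrightarrow> v\<in>V \<Longrightarrow>
   \<exists>xs. is_walk V E xs \<and> hd xs = u \<and> last xs = v"
  by (auto simp: connected_graph_def)

lemma gdist_ex2:
  assumes "connected_graph V E" "u\<in>V" "v\<in>V"
  shows "\<exists>ys. is_walk V E ys \<and> hd ys = u \<and> last ys = v \<and> length ys = Suc (gdist V E u v)"
proof -
  obtain xs where "is_walk V E xs" "hd xs = u" "last xs = v" using conn_walk[OF assms] by blast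
  then show ?thesis by (rule gdist_ex)
qed

lemma gdist_refl: "u\<in>V \<Longrightarrow> gdist V E u u = 0"
  using gdist_le[of V E "[u]" u u] by (auto simp: is_walk_def)

lemma gdist_zero:
  assumes "connected_graph V E" "u\<in>V" "v\<in>V" "gdist V E u v = 0"
  shows "u = v"
proof -
  obtain ys where ys: "is_walk V E ys" "hd ys = u" "last ys = v" "length ys = Suc 0"
    using gdist_ex2[OF assms(1-3)] assms(4) by auto
  then obtain y where "ys = [y]" by (auto simp: length_Suc_conv)
  then show ?thesis using ys by simp
qed

lemma walk_tl:
  assumes "is_walk V E (x#xs)" "xs \<noteq> []"
  shows "is_walk V E xs \<and> E x (hd xs)"
proof -
  have A: "\<forall>i. Suc i < length (x#xs) \<longrightarrow> E ((x#xs)!i) ((x#xs)!Suc i)"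
    using assms(1) by (simp add: is_walk_def)
  have "E x (hd xs)" using A[rule_format, of 0] assms(2) by (simp add: hd_conv_nth)
  moreover have "is_walk V E xs"
    unfolding is_walk_def
  proof (intro conjI allI impI)
    show "xs \<noteq> []" by fact
    show "set xs \<subseteq> V" using assms(1) by (auto simp: is_walk_def)
    fix i assume "Suc i < length xs"
    then show "E (xs ! i) (xs ! Suc i)" using A[rule_format, of "Suc i"] by simp
  qed
  ultimately show ?thesis by simp
qed

lemma gdist_tri:
  assumes "graph V E" "connected_graph V E" "E u y" "z\<in>V"
  shows "gdist V E u z \<le> Suc (gdist V E y z)"
proof -
  have yV: "y \<in> V" "u \<in> V" using assms(1,3) by (auto simp: graph_def)
  obtain ys where ys: "is_walk V E ys" "hd ys = y" "last ys = z" "length ys = Suc (gdist V E y z)"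
    using gdist_ex2[OF assms(2) yV(1) assms(4)] by auto
  have ne: "ys \<noteq> []" using ys by (auto simp: is_walk_def)
  have w: "is_walk V E (u#ys)"
    unfolding is_walk_def
  proof (intro conjI allI impI)
    show "u # ys \<noteq> []" by simp
    show "set (u#ys) \<subseteq> V" using ys yV by (auto simp: is_walk_def)
    fix i assume i: "Suc i < length (u#ys)"
    show "E ((u#ys) ! i) ((u#ys) ! Suc i)"
    proof (cases i)
      case 0 then show ?thesis using assms(3) ys(2) ne by (simp add: hd_conv_nth)
    next
      case (Suc j) then show ?thesis using ys(1) i by (auto simp: is_walk_def)
    qed
  qed
  have "gdist V E u z \<le> length (u#ys) - 1"
    by (rule gdist_le[OF w]) (use ys ne in auto)
  then show ?thesis using ys by simp
qed

lemma gdist_adj: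
  assumes "graph V E" "connected_graph V E" "E u y"
  shows "gdist V E u y \<le> 1"
proof -
  have "y \<in> V" using assms by (auto simp: graph_def)
  then show ?thesis using gdist_tri[OF assms \<open>y\<in>V\<close>] gdist_refl[of y V E] by simp
qed

lemma gdist_sym_le:
  assumes "graph V E" "connected_graph V E" "u\<in>V" "v\<in>V"
  shows "gdist V E v u \<le> gdist V E u v"
proof -
  obtain ys where ys: "is_walk V E ys" "hd ys = u" "last ys = v" "length ys = Suc (gdist V E u v)"
    using gdist_ex2[OF assms(2-4)] by auto
  have ne: "ys \<noteq> []" using ys by (auto simp: is_walk_def)
  have w: "is_walk V E (rev ys)"
    unfolding is_walk_def
  proof (intro conjI allI impI)
    show "rev ys \<noteq> []" using ne by simp
    show "set (rev ys) \<subseteq> V" using ys by (auto simp: is_walk_def)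
    fix i assume i: "Suc i < length (rev ys)"
    define j where "j = length ys - Suc (Suc i)"
    have j: "Suc j < length ys" "Suc j = length ys - Suc i" using i by (auto simp: j_def)
    have "E (ys ! j) (ys ! Suc j)" using ys(1) j(1) by (auto simp: is_walk_def)
    then have "E (ys ! Suc j) (ys ! j)" using assms(1) by (auto simp: graph_def)
    moreover have "rev ys ! i = ys ! Suc j" using i j by (simp add: rev_nth)
    moreover have "rev ys ! Suc i = ys ! j" using i by (simp add: rev_nth j_def)
    ultimately show "E (rev ys ! i) (rev ys ! Suc i)" by simp
  qed
  have "gdist V E v u \<le> length (rev ys) - 1"
    by (rule gdist_le[OF w]) (use ys ne in \<open>auto simp: hd_rev last_rev\<close>)
  then show ?thesis using ys by simp
qed

lemma gdist_sym:
  assumes "graph V E" "connected_graph V E" "u\<in>V" "v\<in>V"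
  shows "gdist V E v u = gdist V E u v"
  using gdist_sym_le[OF assms] gdist_sym_le[OF assms(1,2,4,3)] by simp


lemma prod_walk:
  assumes p: "is_walk VG EG p" and q: "is_walk VH EH q"
  shows "\<exists>r. is_walk (VG\<times>VH) (strong_prod VG EG VH EH) r \<and> hd r = (hd p, hd q)
     \<and> last r = (last p, last q) \<and> length r = max (length p) (length q)"
proof -
  define a where "a = length p - 1"
  define b where "b = length q - 1"
  have pn: "p \<noteq> []" "q \<noteq> []" using p q by (auto simp: is_walk_def)
  have la: "length p = Suc a" "length q = Suc b" using pn by (auto simp: a_def b_def)
  define r where "r = map (\<lambda>i. (p ! min i a, q ! min i b)) [0..<Suc (max a b)]"
  have lr: "length r = Suc (max a b)" by (simp add: r_def)
  have rn: "r ! i = (p ! min i a, q ! min i b)" if "i < Suc (max a b)" for i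
    using that by (simp add: r_def del: upt_Suc)
  have memp: "p ! min i a \<in> VG" for i
  proof -
    have "min i a < length p" using la by simp
    then have "p ! min i a \<in> set p" by (rule nth_mem)
    moreover have "set p \<subseteq> VG" using p unfolding is_walk_def by blast
    ultimately show ?thesis by blast
  qed
  have memq: "q ! min i b \<in> VH" for i
  proof -
    have "min i b < length q" using la by simp
    then have "q ! min i b \<in> set q" by (rule nth_mem)
    moreover have "set q \<subseteq> VH" using q unfolding is_walk_def by blast
    ultimately show ?thesis by blast
  qed
  have w: "is_walk (VG\<times>VH) (strong_prod VG EG VH EH) r"
    unfolding is_walk_def
  proof (intro conjI allI impI)
    show "r \<noteq> []" using lr by auto
    show "set r \<subseteq> VG \<times> VH"
    proof
      fix z assume "z \<in> set r"
      then obtain i where "z = (p ! min i a, q ! min i b)" unfolding r_def by (auto simp del: upt_Suc)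
      then show "z \<in> VG \<times> VH" using memp[of i] memq[of i] by simp
    qed
    fix i assume i: "Suc i < length r"
    then have i2: "i < max a b" using lr by simp
    have gp: "(p ! min i a = p ! min (Suc i) a \<and> \<not> i < a) \<or> (EG (p ! min i a) (p ! min (Suc i) a) \<and> i < a)"
    proof (cases "i < a")
      case True
      then have "EG (p ! i) (p ! Suc i)" using p la by (auto simp: is_walk_def)
      then show ?thesis using True by (simp add: min_def)
    next
      case False then show ?thesis by (simp add: min_def)
    qed
    have gq: "(q ! min i b = q ! min (Suc i) b \<and> \<not> i < b) \<or> (EH (q ! min i b) (q ! min (Suc i) b) \<and> i < b)"
    proof (cases "i < b")
      case True
      then have "EH (q ! i) (q ! Suc i)" using q la by (auto simp: is_walk_def)
      then show ?thesis using True by (simp add: min_def)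
    next
      case False then show ?thesis by (simp add: min_def)
    qed
    have "r ! i = (p ! min i a, q ! min i b)" "r ! Suc i = (p ! min (Suc i) a, q ! min (Suc i) b)"
      using i lr rn by auto
    then show "strong_prod VG EG VH EH (r ! i) (r ! Suc i)"
      unfolding strong_prod_def using gp gq i2 memp memq by auto
  qed
  have "r \<noteq> []" using lr by auto
  then have "hd r = r ! 0" by (rule hd_conv_nth)
  then have "hd r = (hd p, hd q)" using rn[of 0] pn by (simp add: hd_conv_nth)
  moreover have "last r = (last p, last q)"
  proof -
    have "last r = r ! max a b" using \<open>r \<noteq> []\<close> lr by (simp add: last_conv_nth)
    also have "\<dots> = (p ! a, q ! b)" using rn[of "max a b"] by (simp add: min_def)
    finally show ?thesis using pn la by (simp add: last_conv_nth)
  qed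
  moreover have "length r = max (length p) (length q)" using lr la by simp
  ultimately show ?thesis using w by blast
qed

lemma proj_fst:
  assumes "graph VG EG" "connected_graph VG EG"
  shows "is_walk (VG\<times>VH) (strong_prod VG EG VH EH) xs \<Longrightarrow>
     gdist VG EG (fst (hd xs)) (fst (last xs)) \<le> length xs - 1"
proof (induction xs)
  case Nil then show ?case by (simp add: is_walk_def)
next
  case (Cons x xs)
  have xV: "fst x \<in> VG" using Cons.prems by (auto simp: is_walk_def)
  show ?case
  proof (cases "xs = []")
    case True then show ?thesis using gdist_refl[OF xV] by simp
  next
    case False
    have t: "is_walk (VG\<times>VH) (strong_prod VG EG VH EH) xs"
      "strong_prod VG EG VH EH x (hd xs)" using walk_tl[OF Cons.prems False] by auto
    have IH: "gdist VG EG (fst (hd xs)) (fst (last xs)) \<le> length xs - 1" using Cons.IH t(1) .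
    have "last xs \<in> VG \<times> VH" using t(1) last_in_set[OF False] unfolding is_walk_def by blast
    then have lV: "fst (last xs) \<in> VG" by (cases "last xs") auto
    have "fst x = fst (hd xs) \<or> EG (fst x) (fst (hd xs))" using t(2) by (auto simp: strong_prod_def)
    then have "gdist VG EG (fst x) (fst (last xs)) \<le> Suc (gdist VG EG (fst (hd xs)) (fst (last xs)))"
      using gdist_tri[OF assms _ lV] by fastforce
    moreover have "0 < length xs" using False by simp
    ultimately have "gdist VG EG (fst x) (fst (last xs)) \<le> length xs" using IH by linarith
    moreover have "last (x#xs) = last xs" using False by simp
    ultimately show ?thesis by simp
  qed
qed

lemma proj_snd:
  assumes "graph VH EH" "connected_graph VH EH"
  shows "is_walk (VG\<times>VH) (strong_prod VG EG VH EH) xs \<Longrightarrow>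
     gdist VH EH (snd (hd xs)) (snd (last xs)) \<le> length xs - 1"
proof (induction xs)
  case Nil then show ?case by (simp add: is_walk_def)
next
  case (Cons x xs)
  have xV: "snd x \<in> VH" using Cons.prems by (auto simp: is_walk_def)
  show ?case
  proof (cases "xs = []")
    case True then show ?thesis using gdist_refl[OF xV] by simp
  next
    case False
    have t: "is_walk (VG\<times>VH) (strong_prod VG EG VH EH) xs"
      "strong_prod VG EG VH EH x (hd xs)" using walk_tl[OF Cons.prems False] by auto
    have IH: "gdist VH EH (snd (hd xs)) (snd (last xs)) \<le> length xs - 1" using Cons.IH t(1) .
    have "last xs \<in> VG \<times> VH" using t(1) last_in_set[OF False] unfolding is_walk_def by blast
    then have lV: "snd (last xs) \<in> VH" by (cases "last xs") auto
    have "snd x = snd (hd xs) \<or> EH (snd x) (snd (hd xs))" using t(2) by (auto simp: strong_prod_def)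
    then have "gdist VH EH (snd x) (snd (last xs)) \<le> Suc (gdist VH EH (snd (hd xs)) (snd (last xs)))"
      using gdist_tri[OF assms _ lV] by fastforce
    moreover have "0 < length xs" using False by simp
    ultimately have "gdist VH EH (snd x) (snd (last xs)) \<le> length xs" using IH by linarith
    moreover have "last (x#xs) = last xs" using False by simp
    ultimately show ?thesis by simp
  qed
qed

lemma dist_prod:
  assumes G: "graph VG EG" "connected_graph VG EG" and H: "graph VH EH" "connected_graph VH EH"
    and V: "g \<in> VG" "g' \<in> VG" "h \<in> VH" "h' \<in> VH"
  shows "gdist (VG\<times>VH) (strong_prod VG EG VH EH) (g,h) (g',h')
     = max (gdist VG EG g g') (gdist VH EH h h')"
proof -
  obtain p where p: "is_walk VG EG p" "hd p = g" "last p = g'" "length p = Suc (gdist VG EG g g')"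
    using gdist_ex2[OF G(2) V(1,2)] by blast
  obtain q where q: "is_walk VH EH q" "hd q = h" "last q = h'" "length q = Suc (gdist VH EH h h')"
    using gdist_ex2[OF H(2) V(3,4)] by blast
  obtain r where r: "is_walk (VG\<times>VH) (strong_prod VG EG VH EH) r" "hd r = (g,h)" "last r = (g',h')"
     "length r = max (length p) (length q)"
    using prod_walk[OF p(1) q(1)] p q by auto
  have le: "gdist (VG\<times>VH) (strong_prod VG EG VH EH) (g,h) (g',h') \<le> max (gdist VG EG g g') (gdist VH EH h h')"
    using gdist_le[OF r(1-3)] r(4) p(4) q(4) by simp
  obtain s where s: "is_walk (VG\<times>VH) (strong_prod VG EG VH EH) s" "hd s = (g,h)" "last s = (g',h')"
     "length s = Suc (gdist (VG\<times>VH) (strong_prod VG EG VH EH) (g,h) (g',h'))"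
    using gdist_ex[OF r(1-3)] by blast
  have "gdist VG EG g g' \<le> gdist (VG\<times>VH) (strong_prod VG EG VH EH) (g,h) (g',h')"
    using proj_fst[OF G s(1)] s by simp
  moreover have "gdist VH EH h h' \<le> gdist (VG\<times>VH) (strong_prod VG EG VH EH) (g,h) (g',h')"
    using proj_snd[OF H s(1)] s by simp
  ultimately show ?thesis using le by simp
qed


lemma comp_bound:
  assumes "graph V E" "connected_graph V E" "x \<in> V" "x' \<in> V" "x2 \<in> V"
    "x2 = x \<or> E x x2" "max_distant V E x x' \<or> (x = x' \<and> 1 \<le> m)" "gdist V E x x' \<le> m"
  shows "gdist V E x' x2 \<le> m"
proof (cases "x2 = x")
  case True then show ?thesis using gdist_sym[OF assms(1,2,3,4)] assms(8) by simp
next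
  case False
  then have e: "E x x2" using assms(6) by simp
  show ?thesis
  proof (cases "max_distant V E x x'")
    case True then show ?thesis using e assms(5,8) unfolding max_distant_def by force
  next
    case False
    then have "x = x'" "1 \<le> m" using assms(7) by auto
    then show ?thesis using gdist_adj[OF assms(1,2) e] by simp
  qed
qed

lemma gdist_pos:
  assumes "connected_graph V E" "u\<in>V" "v\<in>V" "u \<noteq> v"
  shows "1 \<le> gdist V E u v"
  using gdist_zero[OF assms(1-3)] assms(4) by (cases "gdist V E u v") auto

lemma indep_mono:
  assumes "finite V" "\<And>x y. E1 x y \<Longrightarrow> E2 x y"
  shows "indep_num V E2 \<le> indep_num V E1"
proof -
  have sub: "{S. independent_set V E2 S} \<subseteq> {S. independent_set V E1 S}"
    unfolding independent_set_def using assms(2) by blast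
  have fin: "finite {S. independent_set V E1 S}"
    by (rule finite_subset[of _ "Pow V"]) (use assms(1) in \<open>auto simp: independent_set_def\<close>)
  have ne: "{} \<in> {S. independent_set V E2 S}" by (simp add: independent_set_def)
  show ?thesis unfolding indep_num_def
    by (rule Max_mono) (use sub fin ne in auto)
qed

lemma incl1:
  assumes G: "graph VG EG" "connected_graph VG EG" and H: "graph VH EH" "connected_graph VH EH"
    and e: "strong_prod VG (SR VG EG) VH (SR VH EH) x y"
  shows "SR (VG \<times> VH) (strong_prod VG EG VH EH) x y"
proof -
  obtain g h g' h' where xy: "x = (g,h)" "y = (g',h')" by (cases x, cases y) auto
  have V: "g \<in> VG" "h \<in> VH" "g' \<in> VG" "h' \<in> VH" using e xy by (auto simp: strong_prod_def)
  have cases: "(g = g' \<and> SR VH EH h h') \<or> (SR VG EG g g' \<and> h = h') \<or> (SR VG EG g g' \<and> SR VH EH h h')"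
    using e xy by (auto simp: strong_prod_def)
  have ne: "x \<noteq> y" using cases xy by (auto simp: SR_def)
  define a where "a = gdist VG EG g g'"
  define b where "b = gdist VH EH h h'"
  have a': "gdist VG EG g' g = a" using gdist_sym[OF G V(1,3)] a_def by simp
  have b': "gdist VH EH h' h = b" using gdist_sym[OF H V(2,4)] b_def by simp
  have gc: "max_distant VG EG g g' \<or> (g = g' \<and> 1 \<le> max a b)"
    and gc': "max_distant VG EG g' g \<or> (g' = g \<and> 1 \<le> max a b)"
  proof -
    show "max_distant VG EG g g' \<or> (g = g' \<and> 1 \<le> max a b)"
    proof (cases "SR VG EG g g'")
      case True then show ?thesis by (auto simp: SR_def mutually_max_distant_def)
    next
      case False
      then have "g = g'" "h \<noteq> h'" using cases by (auto simp: SR_def)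
      then show ?thesis using gdist_pos[OF H(2) V(2,4)] b_def by auto
    qed
    show "max_distant VG EG g' g \<or> (g' = g \<and> 1 \<le> max a b)"
    proof (cases "SR VG EG g g'")
      case True then show ?thesis by (auto simp: SR_def mutually_max_distant_def)
    next
      case False
      then have "g = g'" "h \<noteq> h'" using cases by (auto simp: SR_def)
      then show ?thesis using gdist_pos[OF H(2) V(2,4)] b_def by auto
    qed
  qed
  have hc: "max_distant VH EH h h' \<or> (h = h' \<and> 1 \<le> max a b)"
    and hc': "max_distant VH EH h' h \<or> (h' = h \<and> 1 \<le> max a b)"
  proof -
    show "max_distant VH EH h h' \<or> (h = h' \<and> 1 \<le> max a b)"
    proof (cases "SR VH EH h h'")
      case True then show ?thesis by (auto simp: SR_def mutually_max_distant_def)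
    next
      case False
      then have "h = h'" "g \<noteq> g'" using cases by (auto simp: SR_def)
      then show ?thesis using gdist_pos[OF G(2) V(1,3)] a_def by auto
    qed
    show "max_distant VH EH h' h \<or> (h' = h \<and> 1 \<le> max a b)"
    proof (cases "SR VH EH h h'")
      case True then show ?thesis by (auto simp: SR_def mutually_max_distant_def)
    next
      case False
      then have "h = h'" "g \<noteq> g'" using cases by (auto simp: SR_def)
      then show ?thesis using gdist_pos[OF G(2) V(1,3)] a_def by auto
    qed
  qed
  have d: "gdist (VG\<times>VH) (strong_prod VG EG VH EH) (g,h) (g',h') = max a b"
    using dist_prod[OF G H V(1,3,2,4)] a_def b_def by simp
  have d': "gdist (VG\<times>VH) (strong_prod VG EG VH EH) (g',h') (g,h) = max a b"
    using dist_prod[OF G H V(3,1,4,2)] a' b' by simp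
  have m1: "max_distant (VG\<times>VH) (strong_prod VG EG VH EH) (g,h) (g',h')"
    unfolding max_distant_def
  proof (intro ballI impI)
    fix w assume w: "w \<in> VG \<times> VH" "strong_prod VG EG VH EH (g,h) w"
    obtain g2 h2 where w2: "w = (g2,h2)" by (cases w) auto
    have W: "g2 \<in> VG" "h2 \<in> VH" using w w2 by auto
    have s1: "g2 = g \<or> EG g g2" "h2 = h \<or> EH h h2" using w(2) w2 by (auto simp: strong_prod_def)
    have "gdist VG EG g' g2 \<le> max a b"
      by (rule comp_bound[OF G V(1,3) W(1) s1(1) gc]) (simp add: a_def)
    moreover have "gdist VH EH h' h2 \<le> max a b"
      by (rule comp_bound[OF H V(2,4) W(2) s1(2) hc]) (simp add: b_def)
    ultimately show "gdist (VG\<times>VH) (strong_prod VG EG VH EH) (g',h') w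
        \<le> gdist (VG\<times>VH) (strong_prod VG EG VH EH) (g,h) (g',h')"
      using dist_prod[OF G H V(3) W(1) V(4) W(2)] d w2 by simp
  qed
  have m2: "max_distant (VG\<times>VH) (strong_prod VG EG VH EH) (g',h') (g,h)"
    unfolding max_distant_def
  proof (intro ballI impI)
    fix w assume w: "w \<in> VG \<times> VH" "strong_prod VG EG VH EH (g',h') w"
    obtain g2 h2 where w2: "w = (g2,h2)" by (cases w) auto
    have W: "g2 \<in> VG" "h2 \<in> VH" using w w2 by auto
    have s1: "g2 = g' \<or> EG g' g2" "h2 = h' \<or> EH h' h2" using w(2) w2 by (auto simp: strong_prod_def)
    have "gdist VG EG g g2 \<le> max a b"
      by (rule comp_bound[OF G V(3,1) W(1) s1(1) gc']) (simp add: a')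
    moreover have "gdist VH EH h h2 \<le> max a b"
      by (rule comp_bound[OF H V(4,2) W(2) s1(2) hc']) (simp add: b')
    ultimately show "gdist (VG\<times>VH) (strong_prod VG EG VH EH) (g,h) w
        \<le> gdist (VG\<times>VH) (strong_prod VG EG VH EH) (g',h') (g,h)"
      using dist_prod[OF G H V(1) W(1) V(2) W(2)] d' w2 by simp
  qed
  show ?thesis unfolding SR_def mutually_max_distant_def
    using m1 m2 ne V xy by auto
qed


lemma incl2:
  assumes G: "graph VG EG" "connected_graph VG EG" and H: "graph VH EH" "connected_graph VH EH"
    and e: "SR (VG \<times> VH) (strong_prod VG EG VH EH) x y"
  shows "cart_sum VG (SR VG EG) VH (SR VH EH) x y"
proof -
  obtain g h g' h' where xy: "x = (g,h)" "y = (g',h')" by (cases x, cases y) auto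
  have V: "g \<in> VG" "h \<in> VH" "g' \<in> VG" "h' \<in> VH" using e xy by (auto simp: SR_def)
  have ne: "(g,h) \<noteq> (g',h')" using e xy by (auto simp: SR_def)
  have m1: "max_distant (VG\<times>VH) (strong_prod VG EG VH EH) (g,h) (g',h')"
   and m2: "max_distant (VG\<times>VH) (strong_prod VG EG VH EH) (g',h') (g,h)"
    using e xy by (auto simp: SR_def mutually_max_distant_def)
  define a where "a = gdist VG EG g g'"
  define b where "b = gdist VH EH h h'"
  have a': "gdist VG EG g' g = a" using gdist_sym[OF G V(1,3)] a_def by simp
  have b': "gdist VH EH h' h = b" using gdist_sym[OF H V(2,4)] b_def by simp
  have d: "gdist (VG\<times>VH) (strong_prod VG EG VH EH) (g,h) (g',h') = max a b"
    using dist_prod[OF G H V(1,3,2,4)] a_def b_def by simp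
  have d': "gdist (VG\<times>VH) (strong_prod VG EG VH EH) (g',h') (g,h) = max a b"
    using dist_prod[OF G H V(3,1,4,2)] a' b' by simp
  show ?thesis
  proof (cases "b \<le> a")
    case True
    have gne: "g \<noteq> g'"
    proof
      assume "g = g'"
      then have "a = 0" using gdist_refl[OF V(1)] a_def by simp
      then have "b = 0" using True by simp
      then have "h = h'" using gdist_zero[OF H(2) V(2,4)] b_def by simp
      then show False using ne \<open>g = g'\<close> by simp
    qed
    have md1: "max_distant VG EG g g'" unfolding max_distant_def
    proof (intro ballI impI)
      fix g2 assume g2: "g2 \<in> VG" "EG g g2"
      have "strong_prod VG EG VH EH (g,h) (g2,h)" using g2 V by (simp add: strong_prod_def)
      then have "gdist (VG\<times>VH) (strong_prod VG EG VH EH) (g',h') (g2,h) \<le> max a b"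
        using m1 g2 V d unfolding max_distant_def by auto
      then show "gdist VG EG g' g2 \<le> gdist VG EG g g'"
        using dist_prod[OF G H V(3) g2(1) V(4,2)] True a_def by simp
    qed
    have md2: "max_distant VG EG g' g" unfolding max_distant_def
    proof (intro ballI impI)
      fix g2 assume g2: "g2 \<in> VG" "EG g' g2"
      have "strong_prod VG EG VH EH (g',h') (g2,h')" using g2 V by (simp add: strong_prod_def)
      then have "gdist (VG\<times>VH) (strong_prod VG EG VH EH) (g,h) (g2,h') \<le> max a b"
        using m2 g2 V d' unfolding max_distant_def by auto
      then show "gdist VG EG g g2 \<le> gdist VG EG g' g"
        using dist_prod[OF G H V(1) g2(1) V(2,4)] True a' b_def by simp
    qed
    have "SR VG EG g g'" using gne md1 md2 V by (simp add: SR_def mutually_max_distant_def)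
    then show ?thesis using xy V by (simp add: cart_sum_def)
  next
    case False
    have hne: "h \<noteq> h'"
    proof
      assume "h = h'"
      then have "b = 0" using gdist_refl[OF V(2)] b_def by simp
      then show False using False by simp
    qed
    have md1: "max_distant VH EH h h'" unfolding max_distant_def
    proof (intro ballI impI)
      fix h2 assume h2: "h2 \<in> VH" "EH h h2"
      have "strong_prod VG EG VH EH (g,h) (g,h2)" using h2 V by (simp add: strong_prod_def)
      then have "gdist (VG\<times>VH) (strong_prod VG EG VH EH) (g',h') (g,h2) \<le> max a b"
        using m1 h2 V d unfolding max_distant_def by auto
      then show "gdist VH EH h' h2 \<le> gdist VH EH h h'"
        using dist_prod[OF G H V(3,1,4) h2(1)] False a' b_def by simp
    qed
    have md2: "max_distant VH EH h' h" unfolding max_distant_def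
    proof (intro ballI impI)
      fix h2 assume h2: "h2 \<in> VH" "EH h' h2"
      have "strong_prod VG EG VH EH (g',h') (g',h2)" using h2 V by (simp add: strong_prod_def)
      then have "gdist (VG\<times>VH) (strong_prod VG EG VH EH) (g,h) (g',h2) \<le> max a b"
        using m2 h2 V d' unfolding max_distant_def by auto
      then show "gdist VH EH h h2 \<le> gdist VH EH h' h"
        using dist_prod[OF G H V(1,3,2) h2(1)] False a_def b' by simp
    qed
    have "SR VH EH h h'" using hne md1 md2 V by (simp add: SR_def mutually_max_distant_def)
    then show ?thesis using xy V by (simp add: cart_sum_def)
  qed
qed

theorem corollary8:
  fixes VG :: "'a set" and EG :: "'a \<Rightarrow> 'a \<Rightarrow> bool"
    and VH :: "'b set" and EH :: "'b \<Rightarrow> 'b \<Rightarrow> bool"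
  assumes "graph VG EG" and "connected_graph VG EG"
      and "graph VH EH" and "connected_graph VH EH"
  shows "indep_num (VG \<times> VH) (strong_prod VG (SR VG EG) VH (SR VH EH))
           \<ge> indep_num (VG \<times> VH) (SR (VG \<times> VH) (strong_prod VG EG VH EH))
       \<and> indep_num (VG \<times> VH) (SR (VG \<times> VH) (strong_prod VG EG VH EH))
           \<ge> indep_num (VG \<times> VH) (cart_sum VG (SR VG EG) VH (SR VH EH))"
proof -
  have fin: "finite (VG \<times> VH)" using assms(1,3) by (simp add: graph_def)
  show ?thesis
  proof
    show "indep_num (VG \<times> VH) (strong_prod VG (SR VG EG) VH (SR VH EH))
           \<ge> indep_num (VG \<times> VH) (SR (VG \<times> VH) (strong_prod VG EG VH EH))"
      by (rule indep_mono[OF fin]) (rule incl1[OF assms])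
    show "indep_num (VG \<times> VH) (SR (VG \<times> VH) (strong_prod VG EG VH EH))
           \<ge> indep_num (VG \<times> VH) (cart_sum VG (SR VG EG) VH (SR VH EH))"
      by (rule indep_mono[OF fin]) (rule incl2[OF assms])
  qed
qed

end
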